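(* The SISO tree refinement relation $\lesssim$ is reflexive and transitive on SISO trees.
   Context: Sorts: $\mathsf{S} ::= \mathtt{nat} \mid \mathtt{int} \mid \mathtt{bool} \mid \mathtt{unit}$; subsorting $\leq:$ is the least reflexive relation on sorts with $\mathtt{nat}\leq:\mathtt{int}$. Participants $\mathsf{p},\mathsf{q},\mathsf{r}$ and labels $\ell$ range over fixed sets. SISO trees are the possibly infinite terms generated coinductively by $\mathsf{W} ::= \mathtt{end} \mid \mathsf{p}?\ell(\mathsf{S}).\mathsf{W} \mid \mathsf{p}!\ell(\mathsf{S}).\mathsf{W}$ (input from / output to participant $\mathsf{p}$ of label $\ell$ with payload sort $\mathsf{S}$). $\mathrm{act}(\mathsf{W})$ is defined coinductively by $\mathrm{act}(\mathtt{end})=\emptyset$, $\mathrm{act}(\mathsf{p}?\ell(\mathsf{S}).\mathsf{W})=\{\mathsf{p}?\}\cup\mathrm{act}(\mathsf{W})$, $\mathrm{act}(\mathsf{p}!\ell(\mathsf{S}).\mathsf{W})=\{\mathsf{p}!\}\cup\mathrm{act}(\mathsf{W})$. For a participant $\mathsf{p}$, $\mathcal{A}^{(\mathsf{p})}$ ranges over nonempty finite sequences of inputs $\mathsf{q}?\ell(\mathsf{S})$ with $\mathsf{q}\neq\mathsf{p}$, and $\mathcal{B}^{(\mathsf{p})}$ over nonempty finite sequences whose elements are inputs $\mathsf{r}?\ell(\mathsf{S})$ (any $\mathsf{r}$) or outputs $\mathsf{q}!\ell(\mathsf{S})$ with $\mathsf{q}\neq\mathsf{p}$; $\mathcal{A}^{(\mathsf{p})}.\mathsf{W}$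 denotes the SISO tree obtained by prefixing $\mathsf{W}$ with the sequence. The SISO refinement $\lesssim$ is the largest relation on SISO trees closed backward under the rules: (ref-in) $\mathsf{p}?\ell(\mathsf{S}).\mathsf{W}\lesssim\mathsf{p}?\ell(\mathsf{S}').\mathsf{W}'$ if $\mathsf{S}'\leq:\mathsf{S}$ and $\mathsf{W}\lesssim\mathsf{W}'$; (ref-$\mathcal{A}$) $\mathsf{p}?\ell(\mathsf{S}).\mathsf{W}\lesssim\mathcal{A}^{(\mathsf{p})}.\mathsf{p}?\ell(\mathsf{S}').\mathsf{W}'$ if $\mathsf{S}'\leq:\mathsf{S}$, $\mathsf{W}\lesssim\mathcal{A}^{(\mathsf{p})}.\mathsf{W}'$ and $\mathrm{act}(\mathsf{W})=\mathrm{act}(\mathcal{A}^{(\mathsf{p})}.\mathsf{W}')$; (ref-out) $\mathsf{p}!\ell(\mathsf{S}).\mathsf{W}\lesssim\mathsf{p}!\ell(\mathsf{S}').\mathsf{W}'$ if $\mathsf{S}\leq:\mathsf{S}'$ and $\mathsf{W}\lesssim\mathsf{W}'$; (ref-$\mathcal{B}$) $\mathsf{p}!\ell(\mathsf{S}).\mathsf{W}\lesssim\mathcal{B}^{(\mathsf{p})}.\mathsf{p}!\ell(\mathsf{S}').\mathsf{W}'$ if $\mathsf{S}\leq:\mathsf{S}'$, $\mathsf{W}\lesssim\mathcal{B}^{(\mathsf{p})}.\mathsf{W}'$ and $\mathrm{act}(\mathsf{W})=\mathrm{act}(\mathcal{B}^{(\mathsf{p})}.\mathsf{W}')$; (ref-end)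 $\mathtt{end}\lesssim\mathtt{end}$. *)

theory Defs
  imports Main
begin

datatype srt = SNat | SInt | SBool | SUnit

definition subsort :: "srt \<Rightarrow> srt \<Rightarrow> bool" where
  "subsort S T \<longleftrightarrow> S = T \<or> (S = SNat \<and> T = SInt)"

codatatype ('p, 'l) siso =
    End
  | In 'p 'l srt "('p, 'l) siso"
  | Out 'p 'l srt "('p, 'l) siso"

datatype 'p action = AIn 'p | AOut 'p

inductive occurs :: "'p action \<Rightarrow> ('p, 'l) siso \<Rightarrow> bool" where
  occ_in_here: "occurs (AIn p) (In p l S W)"
| occ_in_later: "occurs a W \<Longrightarrow> occurs a (In p l S W)"
| occ_out_here: "occurs (AOut p) (Out p l S W)"
| occ_out_later: "occurs a W \<Longrightarrow> occurs a (Out p l S W)"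

definition act :: "('p, 'l) siso \<Rightarrow> 'p action set" where
  "act W = {a. occurs a W}"

datatype ('p, 'l) item = IIn 'p 'l srt | IOut 'p 'l srt

fun pre1 :: "('p, 'l) item \<Rightarrow> ('p, 'l) siso \<Rightarrow> ('p, 'l) siso" where
  "pre1 (IIn q l S) W = In q l S W"
| "pre1 (IOut q l S) W = Out q l S W"

definition prefix :: "('p, 'l) item list \<Rightarrow> ('p, 'l) siso \<Rightarrow> ('p, 'l) siso" where
  "prefix xs W = foldr pre1 xs W"

definition is_A :: "'p \<Rightarrow> ('p, 'l) item list \<Rightarrow> bool" where
  "is_A p xs \<longleftrightarrow> xs \<noteq> [] \<and> (\<forall>x\<in>set xs. \<exists>q l S. x = IIn q l S \<and> q \<noteq> p)"

definition is_B :: "'p \<Rightarrow> ('p, 'l) item list \<Rightarrow> bool" where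
  "is_B p xs \<longleftrightarrow> xs \<noteq> [] \<and>
     (\<forall>x\<in>set xs. (\<exists>r l S. x = IIn r l S) \<or> (\<exists>q l S. x = IOut q l S \<and> q \<noteq> p))"

coinductive refines :: "('p, 'l) siso \<Rightarrow> ('p, 'l) siso \<Rightarrow> bool" where
  ref_in: "subsort S' S \<Longrightarrow> refines W W' \<Longrightarrow> refines (In p l S W) (In p l S' W')"
| ref_A: "is_A p A \<Longrightarrow> subsort S' S \<Longrightarrow> refines W (prefix A W') \<Longrightarrow>
          act W = act (prefix A W') \<Longrightarrow>
          refines (In p l S W) (prefix A (In p l S' W'))"
| ref_out: "subsort S S' \<Longrightarrow> refines W W' \<Longrightarrow> refines (Out p l S W) (Out p l S' W')"
| ref_B: "is_B p B \<Longrightarrow> subsort S S' \<Longrightarrow> refines W (prefix B W') \<Longrightarrow>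
          act W = act (prefix B W') \<Longrightarrow>
          refines (Out p l S W) (prefix B (Out p l S' W'))"
| ref_end: "refines End End"

end

theory Submission
  imports Defs
begin

definition isA0 :: "'p \<Rightarrow> ('p, 'l) item list \<Rightarrow> bool" where
  "isA0 p xs \<longleftrightarrow> (\<forall>x\<in>set xs. \<exists>q l S. x = IIn q l S \<and> q \<noteq> p)"

definition isB0 :: "'p \<Rightarrow> ('p, 'l) item list \<Rightarrow> bool" where
  "isB0 p xs \<longleftrightarrow> (\<forall>x\<in>set xs. (\<exists>r l S. x = IIn r l S) \<or> (\<exists>q l S. x = IOut q l S \<and> q \<noteq> p))"

fun iact :: "('p, 'l) item \<Rightarrow> 'p action" where
  "iact (IIn q l S) = AIn q"
| "iact (IOut q l S) = AOut q"

lemma prefix_Nil[simp]: "prefix [] W = W" by (simp add: prefix_def)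
lemma prefix_Cons[simp]: "prefix (x # xs) W = pre1 x (prefix xs W)" by (simp add: prefix_def)
lemma prefix_append[simp]: "prefix (xs @ ys) W = prefix xs (prefix ys W)" by (simp add: prefix_def)

lemma pre1_inj[simp]: "pre1 x W = pre1 y V \<longleftrightarrow> x = y \<and> W = V"
  by (cases x; cases y; auto)

lemma act_End[simp]: "act End = {}"
  by (auto simp: act_def elim: occurs.cases)
lemma act_In[simp]: "act (In p l S W) = insert (AIn p) (act W)"
  by (auto simp: act_def intro: occurs.intros elim: occurs.cases)
lemma act_Out[simp]: "act (Out p l S W) = insert (AOut p) (act W)"
  by (auto simp: act_def intro: occurs.intros elim: occurs.cases)
lemma act_pre1[simp]: "act (pre1 x W) = insert (iact x) (act W)"
  by (cases x) auto
lemma act_prefix[simp]: "act (prefix xs W) = set (map iact xs) \<union> act W"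
  by (induction xs) auto

lemma refines_act_cases:
  assumes "refines W1 W2"
  shows "(\<exists>p l S S' W W'. W1 = In p l S W \<and> W2 = In p l S' W' \<and> refines W W')
       \<or> (\<exists>p l S S' W W'. W1 = Out p l S W \<and> W2 = Out p l S' W' \<and> refines W W')
       \<or> act W1 = act W2"
  using assms by (cases rule: refines.cases) auto

lemma occurs_fwd: "occurs a W1 \<Longrightarrow> refines W1 W2 \<Longrightarrow> occurs a W2"
proof (induction arbitrary: W2 rule: occurs.induct)
  case (occ_in_here p l S W)
  from refines_act_cases[OF occ_in_here] show ?case
    by (auto intro: occurs.intros simp: act_def)
next
  case (occ_in_later a W p l S)
  from refines_act_cases[OF occ_in_later(3)] show ?case
    using occ_in_later by (auto intro: occurs.intros simp: act_def)
next
  case (occ_out_here p l S W)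
  from refines_act_cases[OF occ_out_here] show ?case
    by (auto intro: occurs.intros simp: act_def)
next
  case (occ_out_later a W p l S)
  from refines_act_cases[OF occ_out_later(3)] show ?case
    using occ_out_later by (auto intro: occurs.intros simp: act_def)
qed

lemma occurs_bwd: "occurs a W2 \<Longrightarrow> refines W1 W2 \<Longrightarrow> occurs a W1"
proof (induction arbitrary: W1 rule: occurs.induct)
  case (occ_in_here p l S W)
  from refines_act_cases[OF occ_in_here] show ?case
    by (auto intro: occurs.intros simp: act_def)
next
  case (occ_in_later a W p l S)
  from refines_act_cases[OF occ_in_later(3)] show ?case
    using occ_in_later by (auto intro: occurs.intros simp: act_def)
next
  case (occ_out_here p l S W)
  from refines_act_cases[OF occ_out_here] show ?case
    by (auto intro: occurs.intros simp: act_def)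
next
  case (occ_out_later a W p l S)
  from refines_act_cases[OF occ_out_later(3)] show ?case
    using occ_out_later by (auto intro: occurs.intros simp: act_def)
qed

lemma refines_act: "refines W1 W2 \<Longrightarrow> act W1 = act W2"
  unfolding act_def using occurs_fwd occurs_bwd by blast

lemma refA0:
  assumes "isA0 p A" "subsort S' S" "refines W (prefix A W')"
  shows "refines (In p l S W) (prefix A (In p l S' W'))"
proof (cases "A = []")
  case True thus ?thesis using assms by (auto intro: ref_in)
next
  case False thus ?thesis using assms refines_act[OF assms(3)]
    by (intro ref_A) (auto simp: is_A_def isA0_def simp del: act_prefix)
qed

lemma refB0:
  assumes "isB0 p B" "subsort S S'" "refines W (prefix B W')"
  shows "refines (Out p l S W) (prefix B (Out p l S' W'))"
proof (cases "B = []")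
  case True thus ?thesis using assms by (auto intro: ref_out)
next
  case False thus ?thesis using assms refines_act[OF assms(3)]
    by (intro ref_B) (auto simp: is_B_def isB0_def simp del: act_prefix)
qed

lemma prefix_split:
  "prefix xs X = prefix ys (pre1 y Z) \<Longrightarrow>
   (\<exists>zs. xs = ys @ y # zs \<and> Z = prefix zs X) \<or> (\<exists>zs. ys = xs @ zs \<and> X = prefix zs (pre1 y Z))"
proof (induction xs arbitrary: ys)
  case Nil thus ?case by auto
next
  case (Cons x xs)
  show ?case
  proof (cases ys)
    case Nil thus ?thesis using Cons.prems by auto
  next
    case (Cons y' ys')
    with Cons.prems have "x = y'" "prefix xs X = prefix ys' (pre1 y Z)" by auto
    from Cons.IH[OF this(2)] show ?thesis using \<open>x = y'\<close> Cons by auto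
  qed
qed

lemma refl_refines: "refines W W"
proof -
  have "W = W" ..
  then show ?thesis
  proof (coinduction arbitrary: W rule: refines.coinduct)
    case (refines W)
    then show ?case
      by (cases W) (auto simp: subsort_def)
  qed
qed


lemma subsort_trans: "subsort a b \<Longrightarrow> subsort b c \<Longrightarrow> subsort a c"
  by (auto simp: subsort_def)

lemma L_in:
  "isA0 p A \<Longrightarrow> refines (prefix A (In p l S W)) W3 \<Longrightarrow>
   \<exists>A3 S3 W3'. W3 = prefix A3 (In p l S3 W3') \<and> isA0 p A3 \<and> subsort S3 S \<and>
     refines (prefix A W) (prefix A3 W3')"
proof (induction A arbitrary: W3)
  case Nil
  from Nil.prems(2) show ?case
  proof (cases rule: refines.cases)
    case (ref_in S' S0 W0 W' p0 l0)
    then show ?thesis by (intro exI[of _ "[]"]) (auto simp: isA0_def)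
  next
    case (ref_A p0 A S' S0 W0 W' l0)
    then show ?thesis by (intro exI[of _ A]) (auto simp: isA0_def is_A_def)
  qed auto
next
  case (Cons x A)
  from Cons.prems(1) obtain q l' S' where x: "x = IIn q l' S'" "q \<noteq> p" and A: "isA0 p A"
    by (auto simp: isA0_def)
  from Cons.prems(2) x have r: "refines (In q l' S' (prefix A (In p l S W))) W3" by simp
  from r show ?case
  proof (cases rule: refines.cases)
    case (ref_in S'' W'')
    from Cons.IH[OF A ref_in(3)] obtain A3 S3 W3' where
      h: "W'' = prefix A3 (In p l S3 W3')" "isA0 p A3" "subsort S3 S" "refines (prefix A W) (prefix A3 W3')"
      by blast
    show ?thesis
      apply (rule exI[of _ "IIn q l' S'' # A3"], rule exI[of _ S3], rule exI[of _ W3'])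
      using h ref_in x by (auto simp: isA0_def intro: refines.ref_in)
  next
    case (ref_A Aq S'' W'')
    from Cons.IH[OF A ref_A(4)] obtain A3 S3 W3' where
      h: "prefix Aq W'' = prefix A3 (In p l S3 W3')" "isA0 p A3" "subsort S3 S" "refines (prefix A W) (prefix A3 W3')"
      by blast
    from prefix_split[of Aq W'' A3 "IIn p l S3" W3', simplified, OF h(1)]
    show ?thesis
    proof
      assume "\<exists>zs. Aq = A3 @ IIn p l S3 # zs \<and> W3' = prefix zs W''"
      then obtain zs where z: "Aq = A3 @ IIn p l S3 # zs" "W3' = prefix zs W''" by blast
      have "refines (In q l' S' (prefix A W)) (prefix (A3 @ zs) (In q l' S'' W''))"
        apply (rule refA0)
        using ref_A z h x by (auto simp: isA0_def is_A_def)
      then show ?thesis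
        apply (intro exI[of _ A3] exI[of _ S3] exI[of _ "prefix zs (In q l' S'' W'')"])
        using ref_A z h x by auto
    next
      assume "\<exists>zs. A3 = Aq @ zs \<and> W'' = prefix zs (In p l S3 W3')"
      then obtain zs where z: "A3 = Aq @ zs" "W'' = prefix zs (In p l S3 W3')" by blast
      have "refines (In q l' S' (prefix A W)) (prefix Aq (In q l' S'' (prefix zs W3')))"
        apply (rule refA0)
        using ref_A z h x by (auto simp: isA0_def is_A_def)
      then show ?thesis
        apply (intro exI[of _ "Aq @ IIn q l' S'' # zs"] exI[of _ S3] exI[of _ W3'])
        using ref_A z h x by (auto simp: isA0_def is_A_def)
    qed
  qed
qed

lemma L_out:
  "isB0 p B \<Longrightarrow> refines (prefix B (Out p l S W)) W3 \<Longrightarrow>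
   \<exists>B3 S3 W3'. W3 = prefix B3 (Out p l S3 W3') \<and> isB0 p B3 \<and> subsort S S3 \<and>
     refines (prefix B W) (prefix B3 W3')"
proof (induction B arbitrary: W3)
  case Nil
  from Nil.prems(2) show ?case
  proof (cases rule: refines.cases)
    case (ref_out S0 S' W0 W' p0 l0)
    then show ?thesis by (intro exI[of _ "[]"]) (auto simp: isB0_def)
  next
    case (ref_B p0 B S0 S' W0 W' l0)
    then show ?thesis by (intro exI[of _ B]) (auto simp: isB0_def is_B_def)
  qed auto
next
  case (Cons x B)
  from Cons.prems(1) have B: "isB0 p B" by (auto simp: isB0_def)
  from Cons.prems(1) consider (i) r l' S' where "x = IIn r l' S'"
    | (o) q l' S' where "x = IOut q l' S'" "q \<noteq> p"
    by (auto simp: isB0_def)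
  then show ?case
  proof cases
    case i
    from Cons.prems(2) i have r: "refines (In r l' S' (prefix B (Out p l S W))) W3" by simp
    from r show ?thesis
    proof (cases rule: refines.cases)
      case (ref_in S'' W'')
      from Cons.IH[OF B ref_in(3)] obtain B3 S3 W3' where
        h: "W'' = prefix B3 (Out p l S3 W3')" "isB0 p B3" "subsort S S3" "refines (prefix B W) (prefix B3 W3')"
        by blast
      show ?thesis
        apply (rule exI[of _ "IIn r l' S'' # B3"], rule exI[of _ S3], rule exI[of _ W3'])
        using h ref_in i by (auto simp: isB0_def intro: refines.ref_in)
    next
      case (ref_A Ar S'' W'')
      from Cons.IH[OF B ref_A(4)] obtain B3 S3 W3' where
        h: "prefix Ar W'' = prefix B3 (Out p l S3 W3')" "isB0 p B3" "subsort S S3" "refines (prefix B W) (prefix B3 W3')"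
        by blast
      from prefix_split[of Ar W'' B3 "IOut p l S3" W3', simplified, OF h(1)]
      show ?thesis
      proof
        assume "\<exists>zs. Ar = B3 @ IOut p l S3 # zs \<and> W3' = prefix zs W''"
        then show ?thesis using ref_A(2) by (auto simp: is_A_def)
      next
        assume "\<exists>zs. B3 = Ar @ zs \<and> W'' = prefix zs (Out p l S3 W3')"
        then obtain zs where z: "B3 = Ar @ zs" "W'' = prefix zs (Out p l S3 W3')" by blast
        have "refines (In r l' S' (prefix B W)) (prefix Ar (In r l' S'' (prefix zs W3')))"
          apply (rule refA0)
          using ref_A z h i by (auto simp: isA0_def is_A_def)
        then show ?thesis
          apply (intro exI[of _ "Ar @ IIn r l' S'' # zs"] exI[of _ S3] exI[of _ W3'])
          using ref_A z h i by (auto simp: isB0_def is_A_def)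
      qed
    qed
  next
    case o
    from Cons.prems(2) o have r: "refines (Out q l' S' (prefix B (Out p l S W))) W3" by simp
    from r show ?thesis
    proof (cases rule: refines.cases)
      case (ref_out S'' W'')
      from Cons.IH[OF B ref_out(3)] obtain B3 S3 W3' where
        h: "W'' = prefix B3 (Out p l S3 W3')" "isB0 p B3" "subsort S S3" "refines (prefix B W) (prefix B3 W3')"
        by blast
      show ?thesis
        apply (rule exI[of _ "IOut q l' S'' # B3"], rule exI[of _ S3], rule exI[of _ W3'])
        using h ref_out o by (auto simp: isB0_def intro: refines.ref_out)
    next
      case (ref_B Bq S'' W'')
      from Cons.IH[OF B ref_B(4)] obtain B3 S3 W3' where
        h: "prefix Bq W'' = prefix B3 (Out p l S3 W3')" "isB0 p B3" "subsort S S3" "refines (prefix B W) (prefix B3 W3')"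
        by blast
      from prefix_split[of Bq W'' B3 "IOut p l S3" W3', simplified, OF h(1)]
      show ?thesis
      proof
        assume "\<exists>zs. Bq = B3 @ IOut p l S3 # zs \<and> W3' = prefix zs W''"
        then obtain zs where z: "Bq = B3 @ IOut p l S3 # zs" "W3' = prefix zs W''" by blast
        have "refines (Out q l' S' (prefix B W)) (prefix (B3 @ zs) (Out q l' S'' W''))"
          apply (rule refB0)
          using ref_B z h o by (auto simp: isB0_def is_B_def)
        then show ?thesis
          apply (intro exI[of _ B3] exI[of _ S3] exI[of _ "prefix zs (Out q l' S'' W'')"])
          using ref_B z h o by auto
      next
        assume "\<exists>zs. B3 = Bq @ zs \<and> W'' = prefix zs (Out p l S3 W3')"
        then obtain zs where z: "B3 = Bq @ zs" "W'' = prefix zs (Out p l S3 W3')" by blast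
        have "refines (Out q l' S' (prefix B W)) (prefix Bq (Out q l' S'' (prefix zs W3')))"
          apply (rule refB0)
          using ref_B z h o by (auto simp: isB0_def is_B_def)
        then show ?thesis
          apply (intro exI[of _ "Bq @ IOut q l' S'' # zs"] exI[of _ S3] exI[of _ W3'])
          using ref_B z h o by (auto simp: isB0_def is_B_def)
      qed
    qed
  qed
qed


lemma refines_In_inv:
  assumes "refines (In p l S W1') W2"
  shows "\<exists>A S' W2'. W2 = prefix A (In p l S' W2') \<and> isA0 p A \<and> subsort S' S \<and> refines W1' (prefix A W2')"
  using assms
proof (cases rule: refines.cases)
  case (ref_in S' W')
  then show ?thesis by (intro exI[of _ "[]"]) (auto simp: isA0_def)
next
  case (ref_A A S' W')
  then show ?thesis by (intro exI[of _ A]) (auto simp: isA0_def is_A_def)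
qed

lemma refines_Out_inv:
  assumes "refines (Out p l S W1') W2"
  shows "\<exists>B S' W2'. W2 = prefix B (Out p l S' W2') \<and> isB0 p B \<and> subsort S S' \<and> refines W1' (prefix B W2')"
  using assms
proof (cases rule: refines.cases)
  case (ref_out S' W')
  then show ?thesis by (intro exI[of _ "[]"]) (auto simp: isB0_def)
next
  case (ref_B B S' W')
  then show ?thesis by (intro exI[of _ B]) (auto simp: isB0_def is_B_def)
qed

lemma trans_refines:
  assumes "refines W1 W2" "refines W2 W3"
  shows "refines W1 W3"
proof -
  from assms have "\<exists>W2. refines W1 W2 \<and> refines W2 W3" by blast
  then show ?thesis
  proof (coinduction arbitrary: W1 W3 rule: refines.coinduct)
    case (refines W1 W3)
    then obtain W2 where h1: "refines W1 W2" and h2: "refines W2 W3" by blast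
    show ?case
    proof (cases W1)
      case End
      with h1 have "W2 = End" by (auto elim: refines.cases)
      with h2 have "W3 = End" by (auto elim: refines.cases)
      with End show ?thesis by simp
    next
      case (In p l S W1')
      from refines_In_inv[of p l S W1' W2] h1 In obtain A S' W2' where
        a: "W2 = prefix A (In p l S' W2')" "isA0 p A" "subsort S' S" "refines W1' (prefix A W2')"
        by blast
      from L_in[OF a(2)] h2 a(1) obtain A3 S3 W3' where
        b: "W3 = prefix A3 (In p l S3 W3')" "isA0 p A3" "subsort S3 S'" "refines (prefix A W2') (prefix A3 W3')"
        by blast
      have ss: "subsort S3 S" using a b subsort_trans by blast
      have R: "\<exists>W2. refines W1' W2 \<and> refines W2 (prefix A3 W3')" using a b by blast
      have ac: "act W1' = act (prefix A3 W3')"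
        using refines_act[OF a(4)] refines_act[OF b(4)] by simp
      show ?thesis
      proof (cases "A3 = []")
        case True
        then show ?thesis using In b ss R by auto
      next
        case False
        then have iA: "is_A p A3" using b(2) by (auto simp: is_A_def isA0_def)
        show ?thesis
          apply (rule disjI2, rule disjI1)
          apply (rule exI[of _ p], rule exI[of _ A3], rule exI[of _ S3], rule exI[of _ S],
                 rule exI[of _ W1'], rule exI[of _ W3'], rule exI[of _ l])
          using In b ss R ac iA by auto
      qed
    next
      case (Out p l S W1')
      from refines_Out_inv[of p l S W1' W2] h1 Out obtain B S' W2' where
        a: "W2 = prefix B (Out p l S' W2')" "isB0 p B" "subsort S S'" "refines W1' (prefix B W2')"
        by blast
      from L_out[OF a(2)] h2 a(1) obtain B3 S3 W3' where
        b: "W3 = prefix B3 (Out p l S3 W3')" "isB0 p B3" "subsort S' S3" "refines (prefix B W2') (prefix B3 W3')"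
        by blast
      have ss: "subsort S S3" using a b subsort_trans by blast
      have R: "\<exists>W2. refines W1' W2 \<and> refines W2 (prefix B3 W3')" using a b by blast
      have ac: "act W1' = act (prefix B3 W3')"
        using refines_act[OF a(4)] refines_act[OF b(4)] by simp
      show ?thesis
      proof (cases "B3 = []")
        case True
        then show ?thesis using Out b ss R by auto
      next
        case False
        then have iB: "is_B p B3" using b(2) by (auto simp: is_B_def isB0_def)
        show ?thesis
          apply (rule disjI2, rule disjI2, rule disjI2, rule disjI1)
          apply (rule exI[of _ p], rule exI[of _ B3], rule exI[of _ S], rule exI[of _ S3],
                 rule exI[of _ W1'], rule exI[of _ W3'], rule exI[of _ l])
          using Out b ss R ac iB by auto
      qed
    qed
  qed
qed

theorem lemma3p3:
  shows "reflp (refines :: ('p, 'l) siso \<Rightarrow> ('p, 'l) siso \<Rightarrow> bool) \<and>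
         transp (refines :: ('p, 'l) siso \<Rightarrow> ('p, 'l) siso \<Rightarrow> bool)"
  by (auto simp: reflp_def transp_def intro: refl_refines trans_refines)

end
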